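(* Let $r\geq 3$. Then $Z_r$ is $(2,2)$-uniform if and only if $r\leq 4$; $Z_r\backslash y$ is $(2,2)$-uniform if and only if $r\leq 4$; and $Z_r\backslash t$ is $(2,2)$-uniform if and only if $r\leq 5$.
   Context: A matroid is $(2,2)$-uniform if it has no minor isomorphic to $U_{2,2}\oplus U_{0,2}$. For $r\ge3$, the rank-$r$ binary spike $Z_r$ is the vector matroid over $GF(2)$ of the $r\times(2r+1)$ matrix $[I_r\mid J_r-I_r\mid\mathbf 1]$, where $J_r$ is the all-ones $r\times r$ matrix; the last column (the all-ones vector) is the tip $t$, and $y$ denotes any non-tip element of $Z_r$. *)

theory Defs
  imports Main "HOL-Library.Z2"
begin

type_synonym 'a matroid = "'a set \<times> ('a set \<Rightarrow> bool)"

definition gr :: "'a matroid \<Rightarrow> 'a set" where "gr M = fst M"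
definition indep :: "'a matroid \<Rightarrow> 'a set \<Rightarrow> bool" where "indep M = snd M"

definition is_matroid :: "'a matroid \<Rightarrow> bool" where
  "is_matroid M \<longleftrightarrow> finite (gr M) \<and> indep M {} \<and>
     (\<forall>X. indep M X \<longrightarrow> X \<subseteq> gr M) \<and>
     (\<forall>X Y. indep M Y \<and> X \<subseteq> Y \<longrightarrow> indep M X) \<and>
     (\<forall>X Y. indep M X \<and> indep M Y \<and> card X < card Y \<longrightarrow>
        (\<exists>e\<in>Y - X. indep M (insert e X)))"

definition mdel :: "'a matroid \<Rightarrow> 'a set \<Rightarrow> 'a matroid" where
  "mdel M D = (gr M - D, \<lambda>X. indep M X \<and> X \<subseteq> gr M - D)"

definition mcontr :: "'a matroid \<Rightarrow> 'a set \<Rightarrow> 'a matroid" where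
  "mcontr M C = (gr M - C, \<lambda>X. X \<subseteq> gr M - C \<and>
     (\<exists>B. B \<subseteq> C \<and> indep M B \<and> (\<forall>B'. B \<subseteq> B' \<and> B' \<subseteq> C \<and> indep M B' \<longrightarrow> B' = B)
          \<and> indep M (X \<union> B)))"

definition is_minor :: "'a matroid \<Rightarrow> 'a matroid \<Rightarrow> bool" where
  "is_minor N M \<longleftrightarrow> (\<exists>C D. C \<subseteq> gr M \<and> D \<subseteq> gr M \<and> C \<inter> D = {} \<and>
                         N = mdel (mcontr M C) D)"

definition miso :: "'a matroid \<Rightarrow> 'b matroid \<Rightarrow> bool" where
  "miso M N \<longleftrightarrow> (\<exists>f. bij_betw f (gr M) (gr N) \<and>
                    (\<forall>X. X \<subseteq> gr M \<longrightarrow> (indep M X \<longleftrightarrow> indep N (f ` X))))"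

definition U22_U02 :: "nat matroid" where
  "U22_U02 = ({0,1,2,3}, \<lambda>X. X \<subseteq> {0,1})"

definition uniform22 :: "'a matroid \<Rightarrow> bool" where
  "uniform22 M \<longleftrightarrow> \<not> (\<exists>N. is_minor N M \<and> miso N U22_U02)"

text \<open>Columns of [I_r | J_r - I_r | 1] over GF(2), indexed j = 0..2r; rows i = 0..r-1.\<close>
definition spike_col :: "nat \<Rightarrow> nat \<Rightarrow> nat \<Rightarrow> bit" where
  "spike_col r j i = (if j < r then (if i = j then 1 else 0)
                      else if j < 2*r then (if i = j - r then 0 else 1)
                      else 1)"

definition gf2_indep :: "nat \<Rightarrow> (nat \<Rightarrow> nat \<Rightarrow> bit) \<Rightarrow> nat set \<Rightarrow> bool" where
  "gf2_indep r col X \<longleftrightarrow> (\<forall>c :: nat \<Rightarrow> bit.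
      (\<forall>i<r. (\<Sum>j\<in>X. c j * col j i) = 0) \<longrightarrow> (\<forall>j\<in>X. c j = 0))"

definition spike :: "nat \<Rightarrow> nat matroid" where
  "spike r = ({0..2*r}, \<lambda>X. X \<subseteq> {0..2*r} \<and> gf2_indep r (spike_col r) X)"

definition spike_tip :: "nat \<Rightarrow> nat" where "spike_tip r = 2*r"

end

theory Submission
  imports Defs
begin


lemma bit_add_self[simp]: "(x::bit) + x = 0"
  by (cases x) auto

definition VV :: "nat \<Rightarrow> (nat \<Rightarrow> nat \<Rightarrow> bit) \<Rightarrow> nat set \<Rightarrow> nat set" where
  "VV r col S = {i. i < r \<and> (\<Sum>j\<in>S. col j i) = 1}"

lemma sum_symdiff:
  fixes f :: "nat \<Rightarrow> bit"
  assumes "finite A" "finite B"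
  shows "sum f ((A - B) \<union> (B - A)) = sum f A + sum f B"
proof -
  have a: "sum f A = sum f (A - B) + sum f (A \<inter> B)"
  proof -
    have "sum f A = sum f ((A - B) \<union> (A \<inter> B))" by (rule arg_cong[where f="sum f"]) blast
    also have "\<dots> = sum f (A - B) + sum f (A \<inter> B)" using assms by (intro sum.union_disjoint) auto
    finally show ?thesis .
  qed
  have b: "sum f B = sum f (B - A) + sum f (A \<inter> B)"
  proof -
    have "sum f B = sum f ((B - A) \<union> (A \<inter> B))" by (rule arg_cong[where f="sum f"]) blast
    also have "\<dots> = sum f (B - A) + sum f (A \<inter> B)" using assms by (intro sum.union_disjoint) auto
    finally show ?thesis .
  qed
  have c: "sum f ((A - B) \<union> (B - A)) = sum f (A - B) + sum f (B - A)"
    using assms by (intro sum.union_disjoint) auto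
  have "sum f A + sum f B = sum f (A - B) + sum f (B - A) + (sum f (A \<inter> B) + sum f (A \<inter> B))"
    unfolding a b by (simp only: ac_simps)
  then show ?thesis using c by simp
qed

lemma bit_add_eq1: "((x::bit) + y = 1) \<longleftrightarrow> ((x = 1) \<noteq> (y = 1))"
  by (cases x; cases y) auto

lemma VV_symdiff:
  assumes "finite A" "finite B"
  shows "VV r col ((A - B) \<union> (B - A)) = (VV r col A - VV r col B) \<union> (VV r col B - VV r col A)"
  unfolding VV_def using sum_symdiff[OF assms] bit_add_eq1 by auto

lemma VV_empty[simp]: "VV r col {} = {}"
  unfolding VV_def by simp

lemma VV_sub: "VV r col S \<subseteq> {0..<r}"
  unfolding VV_def by auto

lemma gf2_indep_iff:
  assumes "finite X"
  shows "gf2_indep r col X \<longleftrightarrow> (\<forall>S \<subseteq> X. VV r col S = {} \<longrightarrow> S = {})"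
proof
  assume H: "gf2_indep r col X"
  show "\<forall>S \<subseteq> X. VV r col S = {} \<longrightarrow> S = {}"
  proof (intro allI impI)
    fix S assume S: "S \<subseteq> X" "VV r col S = {}"
    define c where "c = (\<lambda>j. if j \<in> S then (1::bit) else 0)"
    have "\<forall>i<r. (\<Sum>j\<in>X. c j * col j i) = 0"
    proof (intro allI impI)
      fix i assume "i < r"
      have "(\<Sum>j\<in>X. c j * col j i) = (\<Sum>j\<in>S. col j i)"
      proof -
        have "(\<Sum>j\<in>X. c j * col j i) = (\<Sum>j\<in>X. if j \<in> S then col j i else 0)"
          unfolding c_def by (rule sum.cong) (auto simp del: mult_bit_eq_and)
        also have "\<dots> = (\<Sum>j\<in>X \<inter> S. col j i)" using assms by (simp add: sum.inter_restrict)
        also have "X \<inter> S = S" using S(1) by auto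
        finally show ?thesis .
      qed
      also have "\<dots> = 0" using S(2) \<open>i < r\<close> unfolding VV_def by auto
      finally show "(\<Sum>j\<in>X. c j * col j i) = 0" .
    qed
    then have "\<forall>j\<in>X. c j = 0" using H unfolding gf2_indep_def by blast
    then show "S = {}"
    proof (intro equals0I)
      fix x assume "\<forall>j\<in>X. c j = 0" "x \<in> S"
      then have "c x = 0" using S(1) by blast
      then show False using \<open>x \<in> S\<close> unfolding c_def by simp
    qed
  qed
next
  assume H: "\<forall>S \<subseteq> X. VV r col S = {} \<longrightarrow> S = {}"
  show "gf2_indep r col X"
    unfolding gf2_indep_def
  proof (intro allI impI)
    fix c :: "nat \<Rightarrow> bit"
    assume Z: "\<forall>i<r. (\<Sum>j\<in>X. c j * col j i) = 0"
    define S where "S = {j \<in> X. c j = 1}"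
    have "VV r col S = {}"
    proof -
      { fix i assume "i < r"
        have "(\<Sum>j\<in>X. c j * col j i) = (\<Sum>j\<in>X. if c j = 1 then col j i else 0)"
          by (rule sum.cong) (auto simp del: mult_bit_eq_and)
        also have "\<dots> = (\<Sum>j\<in>S. col j i)"
          unfolding S_def using assms by (simp add: sum.inter_filter)
        finally have "(\<Sum>j\<in>S. col j i) = 0" using Z \<open>i<r\<close> by simp }
      then show ?thesis unfolding VV_def by auto
    qed
    moreover have "S \<subseteq> X" unfolding S_def by auto
    ultimately have "S = {}" using H by blast
    then show "\<forall>j\<in>X. c j = 0" unfolding S_def by auto
  qed
qed

lemma indep_inj:
  assumes "finite Y" "gf2_indep r col Y"
  shows "inj_on (VV r col) (Pow Y)"
proof (rule inj_onI)
  fix S1 S2 assume S: "S1 \<in> Pow Y" "S2 \<in> Pow Y" "VV r col S1 = VV r col S2"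
  have f: "finite S1" "finite S2" using S assms(1) finite_subset by auto
  have "VV r col (sym_diff S1 S2) = {}" using VV_symdiff[OF f, of r col] S(3) by simp
  moreover have "sym_diff S1 S2 \<subseteq> Y" using S by auto
  ultimately have "sym_diff S1 S2 = {}" using assms gf2_indep_iff by blast
  then show "S1 = S2" by blast
qed

lemma indep_card_le:
  assumes "finite Y" "gf2_indep r col Y"
  shows "card Y \<le> r"
proof -
  have "(2::nat) ^ card Y = card (Pow Y)" using assms(1) by (simp add: card_Pow)
  also have "\<dots> = card (VV r col ` Pow Y)" using indep_inj[OF assms] by (simp add: card_image)
  also have "\<dots> \<le> card (Pow {0..<r})"
    by (rule card_mono) (use VV_sub in auto)
  also have "\<dots> = 2 ^ r" by (simp add: card_Pow)
  finally show ?thesis by (rule power_le_imp_le_exp[rotated]) simp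
qed

lemma span_mem:
  assumes "finite B" "gf2_indep r col B" "\<not> gf2_indep r col (insert c B)" "c \<notin> B"
  shows "VV r col {c} \<in> VV r col ` Pow B"
proof -
  obtain S where S: "S \<subseteq> insert c B" "VV r col S = {}" "S \<noteq> {}"
    using assms(1,3) gf2_indep_iff[of "insert c B"] by auto
  have "c \<in> S"
  proof (rule ccontr)
    assume "c \<notin> S"
    then have "S \<subseteq> B" using S(1) by auto
    then show False using S assms(1,2) gf2_indep_iff by blast
  qed
  define S' where "S' = S - {c}"
  have fS': "finite S'" using S(1) assms(1) unfolding S'_def by (meson finite_Diff finite_insert finite_subset)
  have "S = sym_diff {c} S'" using \<open>c \<in> S\<close> unfolding S'_def by auto
  then have "VV r col S = sym_diff (VV r col {c}) (VV r col S')"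
    using VV_symdiff[of "{c}" S' r col] fS' by simp
  then have "VV r col {c} = VV r col S'" using S(2) by blast
  moreover have "S' \<in> Pow B" using S(1) unfolding S'_def by auto
  ultimately show ?thesis by blast
qed

lemma span_closed:
  assumes "finite B" "u \<in> VV r col ` Pow B" "w \<in> VV r col ` Pow B"
  shows "sym_diff u w \<in> VV r col ` Pow B"
proof -
  obtain S1 S2 where S: "S1 \<subseteq> B" "S2 \<subseteq> B" "u = VV r col S1" "w = VV r col S2" using assms by auto
  have f: "finite S1" "finite S2" using S assms(1) finite_subset by auto
  have "sym_diff u w = VV r col (sym_diff S1 S2)" using VV_symdiff[OF f] S by simp
  moreover have "sym_diff S1 S2 \<in> Pow B" using S by auto
  ultimately show ?thesis by blast
qed

lemma card_span: "finite B \<Longrightarrow> card (VV r col ` Pow B) \<le> 2 ^ card B"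
  by (metis card_Pow card_image_le finite_Pow_iff)

locale wit =
  fixes r col E B c d
  assumes finB: "finite B" and BE: "B \<subseteq> E" and cE: "c \<in> E" and dE: "d \<in> E"
    and cB: "c \<notin> B" and dB: "d \<notin> B" and cd: "c \<noteq> d"
    and inj: "inj_on (\<lambda>x. VV r col {x}) E" and nz: "\<forall>x\<in>E. VV r col {x} \<noteq> {}"
    and iB: "gf2_indep r col B" and nc: "\<not> gf2_indep r col (insert c B)"
    and nd: "\<not> gf2_indep r col (insert d B)"
begin

definition "W = VV r col ` Pow B"
definition "X = insert c (insert d B)"
definition "U = (\<lambda>x. VV r col {x}) ` X"

lemma W_empty: "{} \<in> W" unfolding W_def using VV_empty by blast

lemma finW: "finite W" unfolding W_def using finB by simp

lemma U_sub: "U \<subseteq> W - {{}}"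
proof -
  have "VV r col {x} \<in> W" if "x \<in> X" for x
  proof -
    { assume "x \<in> B" then have ?thesis unfolding W_def by auto }
    moreover { assume "x = c" then have ?thesis unfolding W_def using span_mem[OF finB iB nc cB] by simp }
    moreover { assume "x = d" then have ?thesis unfolding W_def using span_mem[OF finB iB nd dB] by simp }
    ultimately show ?thesis using that unfolding X_def by blast
  qed
  moreover have "X \<subseteq> E" unfolding X_def using BE cE dE by auto
  ultimately show ?thesis unfolding U_def using nz by auto
qed

lemma card_U: "card U = card B + 2"
proof -
  have "X \<subseteq> E" unfolding X_def using BE cE dE by auto
  then have "card U = card X" unfolding U_def using inj by (metis card_image inj_on_subset)
  also have "\<dots> = card B + 2" unfolding X_def using finB cB dB cd by simp
  finally show ?thesis .
qed

lemma card_W_minus: "card (W - {{}}) \<le> 2 ^ card B - 1"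
proof -
  have "card (W - {{}}) = card W - 1" using W_empty finW by simp
  then show ?thesis using card_span[OF finB, of r col] unfolding W_def by simp
qed

lemma bound1: "card B + 2 \<le> 2 ^ card B - 1"
proof -
  have "card U \<le> card (W - {{}})" using U_sub finW by (simp add: card_mono)
  then show ?thesis using card_U card_W_minus by simp
qed

lemma bound2:
  assumes cap: "\<forall>x\<in>E. \<forall>y\<in>E. \<forall>z\<in>E. x \<noteq> y \<longrightarrow> y \<noteq> z \<longrightarrow> x \<noteq> z \<longrightarrow>
      sym_diff (VV r col {x}) (VV r col {y}) \<noteq> VV r col {z}"
  shows "2 * (card B + 2) \<le> 2 ^ card B"
proof -
  define u0 where "u0 = VV r col {c}"
  define T where "T = (\<lambda>u. sym_diff u u0) ` (U - {u0})"
  have XE: "X \<subseteq> E" unfolding X_def using BE cE dE by auto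
  have u0U: "u0 \<in> U" unfolding u0_def U_def X_def by auto
  have u0W: "u0 \<in> W" using u0U U_sub by auto
  have T_sub: "T \<subseteq> W - {{}}"
  proof
    fix t assume "t \<in> T"
    then obtain u where u: "u \<in> U" "u \<noteq> u0" "t = sym_diff u u0" unfolding T_def by auto
    have "t \<in> W" using span_closed[OF finB, of u r col u0] u u0W U_sub unfolding W_def by auto
    moreover have "t \<noteq> {}" using u by blast
    ultimately show "t \<in> W - {{}}" by simp
  qed
  have TU: "T \<inter> U = {}"
  proof (rule ccontr)
    assume "T \<inter> U \<noteq> {}"
    then obtain u where u: "u \<in> U" "u \<noteq> u0" "sym_diff u u0 \<in> U" unfolding T_def by auto
    obtain x where x: "x \<in> X" "u = VV r col {x}" using u(1) unfolding U_def by auto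
    obtain z where z: "z \<in> X" "sym_diff u u0 = VV r col {z}" using u(3) unfolding U_def by auto
    have "x \<noteq> c" using x u(2) unfolding u0_def by auto
    have u0ne: "u0 \<noteq> {}" using nz cE unfolding u0_def by auto
    have une: "u \<noteq> {}" using nz x XE by auto
    have "z \<noteq> x"
    proof
      assume "z = x" then have "sym_diff u u0 = u" using z x by simp
      then have "u0 = {}" by blast
      then show False using u0ne by simp
    qed
    moreover have "z \<noteq> c"
    proof
      assume "z = c" then have "sym_diff u u0 = u0" using z unfolding u0_def by simp
      then have "u = {}" by blast
      then show False using une by simp
    qed
    ultimately show False using cap x z \<open>x \<noteq> c\<close> XE cE unfolding u0_def by blast
  qed
  have injT: "inj_on (\<lambda>u. sym_diff u u0) (U - {u0})"
    by (rule inj_onI) blast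
  have finU: "finite U" unfolding U_def X_def using finB by simp
  have cT: "card T = card U - 1" unfolding T_def using card_image[OF injT] u0U finU by simp
  have "card (U \<union> T) = card U + card T"
    using TU finU T_sub finW by (subst card_Un_disjoint) (auto intro: finite_subset)
  moreover have "card (U \<union> T) \<le> card (W - {{}})" using U_sub T_sub finW by (intro card_mono) auto
  ultimately show ?thesis using card_U card_W_minus cT by simp
qed

end



definition witness :: "'a matroid \<Rightarrow> bool" where
  "witness M \<longleftrightarrow> (\<exists>B a b c d. B \<subseteq> gr M \<and> a \<in> gr M \<and> b \<in> gr M \<and> c \<in> gr M \<and> d \<in> gr M \<and>
     a \<notin> B \<and> b \<notin> B \<and> c \<notin> B \<and> d \<notin> B \<and>
     a \<noteq> b \<and> a \<noteq> c \<and> a \<noteq> d \<and> b \<noteq> c \<and> b \<noteq> d \<and> c \<noteq> d \<and>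
     indep M B \<and> indep M (insert a (insert b B)) \<and> \<not> indep M (insert c B) \<and> \<not> indep M (insert d B))"

lemma gr_mdel_mcontr: "gr (mdel (mcontr M C) D) = gr M - C - D"
  unfolding gr_def mdel_def mcontr_def by simp

lemma indep_mdel_mcontr: "indep (mdel (mcontr M C) D) X \<longleftrightarrow>
   (X \<subseteq> gr M - C \<and> (\<exists>B. B \<subseteq> C \<and> indep M B \<and> (\<forall>B'. B \<subseteq> B' \<and> B' \<subseteq> C \<and> indep M B' \<longrightarrow> B' = B)
          \<and> indep M (X \<union> B))) \<and> X \<subseteq> gr M - C - D"
  unfolding gr_def indep_def mdel_def mcontr_def by simp

lemma minor_witness:
  assumes "is_minor N M" "miso N U22_U02"
  shows "witness M"
proof -
  obtain C D where CD: "C \<subseteq> gr M" "D \<subseteq> gr M" "N = mdel (mcontr M C) D"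
    using assms(1) unfolding is_minor_def by blast
  have grU: "gr U22_U02 = {0,1,2,3}" and iU: "\<And>Y. indep U22_U02 Y = (Y \<subseteq> {0,1})"
    unfolding U22_U02_def gr_def indep_def by auto
  obtain f where f0: "bij_betw f (gr N) (gr U22_U02)" "\<forall>X. X \<subseteq> gr N \<longrightarrow> (indep N X \<longleftrightarrow> indep U22_U02 (f ` X))"
    using assms(2) unfolding miso_def by blast
  have f: "bij_betw f (gr N) {0,1,2,3}" "\<forall>X. X \<subseteq> gr N \<longrightarrow> (indep N X \<longleftrightarrow> f ` X \<subseteq> {0,1})"
    using f0 unfolding grU iU by auto
  define g where "g = inv_into (gr N) f"
  have g: "\<And>k. k \<in> {0,1,2,3} \<Longrightarrow> g k \<in> gr N \<and> f (g k) = k"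
  proof -
    fix k :: nat assume k: "k \<in> {0,1,2,3}"
    have sur: "f ` gr N = {0,1,2,3}" using f(1) by (rule bij_betw_imp_surj_on)
    have "g k \<in> gr N" unfolding g_def by (rule inv_into_into) (use k sur in simp)
    moreover have "f (g k) = k" unfolding g_def by (rule f_inv_into_f) (use k sur in simp)
    ultimately show "g k \<in> gr N \<and> f (g k) = k" by simp
  qed
  define a where "a = g 0" define b where "b = g 1" define c where "c = g 2" define d where "d = g 3"
  have abcd: "a \<in> gr N" "b \<in> gr N" "c \<in> gr N" "d \<in> gr N" "f a = 0" "f b = 1" "f c = 2" "f d = 3"
    using g unfolding a_def b_def c_def d_def by auto
  have dist: "a \<noteq> b" "a \<noteq> c" "a \<noteq> d" "b \<noteq> c" "b \<noteq> d" "c \<noteq> d"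
    using abcd(5-8) by auto
  have grN: "gr N = gr M - C - D" using CD(3) gr_mdel_mcontr by simp
  have "indep N {a,b}" using f(2) abcd by auto
  then have "\<exists>B. B \<subseteq> C \<and> indep M B \<and> (\<forall>B'. B \<subseteq> B' \<and> B' \<subseteq> C \<and> indep M B' \<longrightarrow> B' = B)
          \<and> indep M ({a,b} \<union> B)" unfolding CD(3) indep_mdel_mcontr by (elim conjE)
  then obtain B where B: "B \<subseteq> C" "indep M B" "\<forall>B'. B \<subseteq> B' \<and> B' \<subseteq> C \<and> indep M B' \<longrightarrow> B' = B"
      "indep M ({a,b} \<union> B)"
    by blast
  have "\<not> indep N {c}" using f(2) abcd by auto
  moreover have "{c} \<subseteq> gr M - C" "{c} \<subseteq> gr M - C - D" using abcd grN by auto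
  ultimately have nc: "\<not> indep M ({c} \<union> B)" unfolding CD(3) indep_mdel_mcontr using B(1-3) by blast
  have "\<not> indep N {d}" using f(2) abcd by auto
  moreover have "{d} \<subseteq> gr M - C" "{d} \<subseteq> gr M - C - D" using abcd grN by auto
  ultimately have nd: "\<not> indep M ({d} \<union> B)" unfolding CD(3) indep_mdel_mcontr using B(1-3) by blast
  show ?thesis unfolding witness_def
    apply (rule exI[of _ B], rule exI[of _ a], rule exI[of _ b], rule exI[of _ c], rule exI[of _ d])
    using B nc nd abcd dist grN CD(1) by (auto simp: insert_commute)
qed

lemma witness_minor:
  assumes her: "\<And>X Y. indep M Y \<Longrightarrow> X \<subseteq> Y \<Longrightarrow> indep M X"
    and w: "witness M"
  shows "\<exists>N. is_minor N M \<and> miso N U22_U02"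
proof -
  obtain B a b c d where W: "B \<subseteq> gr M" "a \<in> gr M" "b \<in> gr M" "c \<in> gr M" "d \<in> gr M"
     "a \<notin> B" "b \<notin> B" "c \<notin> B" "d \<notin> B"
     "a \<noteq> b" "a \<noteq> c" "a \<noteq> d" "b \<noteq> c" "b \<noteq> d" "c \<noteq> d"
     "indep M B" "indep M (insert a (insert b B))" "\<not> indep M (insert c B)" "\<not> indep M (insert d B)"
    using w unfolding witness_def by blast
  define D where "D = gr M - B - {a,b,c,d}"
  define N where "N = mdel (mcontr M B) D"
  have grN: "gr N = {a,b,c,d}" unfolding N_def gr_mdel_mcontr D_def using W by auto
  have iN: "indep N X \<longleftrightarrow> X \<subseteq> {a,b,c,d} \<and> indep M (X \<union> B)" for X
  proof -
    have "indep N X \<longleftrightarrow> (X \<subseteq> gr M - B \<and> (\<exists>B0. B0 \<subseteq> B \<and> indep M B0 \<and> (\<forall>B'. B0 \<subseteq> B' \<and> B' \<subseteq> B \<and> indep M B' \<longrightarrow> B' = B0)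
          \<and> indep M (X \<union> B0))) \<and> X \<subseteq> gr M - B - D"
      unfolding N_def by (rule indep_mdel_mcontr)
    also have "\<dots> \<longleftrightarrow> X \<subseteq> {a,b,c,d} \<and> indep M (X \<union> B)"
    proof
      assume L: "(X \<subseteq> gr M - B \<and> (\<exists>B0. B0 \<subseteq> B \<and> indep M B0 \<and> (\<forall>B'. B0 \<subseteq> B' \<and> B' \<subseteq> B \<and> indep M B' \<longrightarrow> B' = B0)
          \<and> indep M (X \<union> B0))) \<and> X \<subseteq> gr M - B - D"
      from L[THEN conjunct1, THEN conjunct2] obtain B0 where H: "B0 \<subseteq> B \<and> indep M B0 \<and> (\<forall>B'. B0 \<subseteq> B' \<and> B' \<subseteq> B \<and> indep M B' \<longrightarrow> B' = B0)
          \<and> indep M (X \<union> B0)" ..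
      then have "B0 \<subseteq> B" "\<forall>B'. B0 \<subseteq> B' \<and> B' \<subseteq> B \<and> indep M B' \<longrightarrow> B' = B0" "indep M (X \<union> B0)"
        by auto
      then have "B0 = B" using W(16) by blast
      then show "X \<subseteq> {a,b,c,d} \<and> indep M (X \<union> B)" using L \<open>indep M (X \<union> B0)\<close> unfolding D_def by auto
    next
      assume R: "X \<subseteq> {a,b,c,d} \<and> indep M (X \<union> B)"
      have s1: "X \<subseteq> gr M - B" "X \<subseteq> gr M - B - D" using R W(2-9) unfolding D_def by auto
      have "\<forall>B'. B \<subseteq> B' \<and> B' \<subseteq> B \<and> indep M B' \<longrightarrow> B' = B" by auto
      then show "(X \<subseteq> gr M - B \<and> (\<exists>B0. B0 \<subseteq> B \<and> indep M B0 \<and> (\<forall>B'. B0 \<subseteq> B' \<and> B' \<subseteq> B \<and> indep M B' \<longrightarrow> B' = B0)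
          \<and> indep M (X \<union> B0))) \<and> X \<subseteq> gr M - B - D"
        using s1 R W(16) by blast
    qed
    finally show ?thesis .
  qed
  define f where "f = (\<lambda>x. if x = a then 0 else if x = b then 1 else if x = c then 2 else (3::nat))"
  have bij: "bij_betw f {a,b,c,d} {0,1,2,3}"
    unfolding bij_betw_def inj_on_def f_def using W by auto
  have iso: "indep N X \<longleftrightarrow> f ` X \<subseteq> {0,1}" if X: "X \<subseteq> {a,b,c,d}" for X
  proof
    assume "indep N X"
    then have I: "indep M (X \<union> B)" using iN by blast
    have "c \<notin> X"
    proof
      assume "c \<in> X" then have "insert c B \<subseteq> X \<union> B" by auto
      then show False using her[OF I] W(18) by blast
    qed
    moreover have "d \<notin> X"
    proof
      assume "d \<in> X" then have "insert d B \<subseteq> X \<union> B" by auto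
      then show False using her[OF I] W(19) by blast
    qed
    ultimately have "X \<subseteq> {a,b}" using X by auto
    then show "f ` X \<subseteq> {0,1}" unfolding f_def using W by auto
  next
    assume "f ` X \<subseteq> {0,1}"
    then have "c \<notin> X" "d \<notin> X" unfolding f_def using W by auto
    then have "X \<union> B \<subseteq> insert a (insert b B)" using X by auto
    then show "indep N X" using iN her[OF W(17)] X by blast
  qed
  have "is_minor N M" unfolding is_minor_def N_def
    by (rule exI[of _ B], rule exI[of _ D]) (use W(1) in \<open>auto simp: D_def\<close>)
  moreover have "miso N U22_U02" unfolding miso_def
  proof (rule exI[of _ f], intro conjI allI impI)
    show "bij_betw f (gr N) (gr U22_U02)" using bij grN by (simp add: U22_U02_def gr_def)
  next
    fix X assume "X \<subseteq> gr N"
    then show "indep N X = indep U22_U02 (f ` X)" using iso grN by (simp add: U22_U02_def indep_def)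
  qed
  ultimately show ?thesis by blast
qed

lemma uniform22_iff:
  assumes "\<And>X Y. indep M Y \<Longrightarrow> X \<subseteq> Y \<Longrightarrow> indep M X"
  shows "uniform22 M \<longleftrightarrow> \<not> witness M"
proof
  assume "uniform22 M"
  then show "\<not> witness M" unfolding uniform22_def using witness_minor[where M=M] assms by blast
next
  assume "\<not> witness M"
  then show "uniform22 M" unfolding uniform22_def using minor_witness by blast
qed



definition K :: "nat \<Rightarrow> nat \<Rightarrow> nat set" where
  "K r x = (if x < r then {x} else if x < 2*r then {0..<r} - {x - r} else {0..<r})"

lemma VV_spike: "VV r (spike_col r) {x} = K r x"
  unfolding VV_def K_def spike_col_def by auto

lemma card_K: "x < r \<Longrightarrow> card (K r x) = 1" "r \<le> x \<Longrightarrow> x < 2*r \<Longrightarrow> card (K r x) = r - 1"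
  "2*r \<le> x \<Longrightarrow> card (K r x) = r"
  unfolding K_def by auto

lemma K_inj:
  assumes "3 \<le> r" "x \<le> 2*r" "y \<le> 2*r" "K r x = K r y"
  shows "x = y"
proof -
  have c: "card (K r x) = card (K r y)" using assms(4) by simp
  consider "x < r" | "r \<le> x" "x < 2*r" | "x = 2*r" using assms(2) by linarith
  then show ?thesis
  proof cases
    case 1
    then show ?thesis
    proof (cases "y < r")
      case True then show ?thesis using 1 assms(4) unfolding K_def by auto
    next
      case False
      then show ?thesis using c card_K[of x r] card_K[of r y] card_K[of y r] 1 assms by (cases "y < 2*r") auto
    qed
  next
    case 2
    then show ?thesis
    proof (cases "y < r")
      case True then show ?thesis using c card_K[of y r] card_K[of r x] 2 assms by auto
    next
      case False
      show ?thesis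
      proof (cases "y < 2*r")
        case True
        have "x - r \<notin> K r x" using 2 unfolding K_def by auto
        then have "x - r \<notin> K r y" using assms(4) by simp
        then have "x - r = y - r" using True False 2 unfolding K_def by auto
        then show ?thesis using False 2 by linarith
      next
        case F2: False
        then show ?thesis using c card_K[of r x] card_K[of r y] 2 assms by auto
      qed
    qed
  next
    case 3
    then show ?thesis
    proof (cases "y < r")
      case True then show ?thesis using c card_K[of y r] card_K[of r x] 3 assms by auto
    next
      case False
      then show ?thesis using c card_K[of r x] card_K[of r y] 3 assms by (cases "y < 2*r") auto
    qed
  qed
qed

lemma K_nz:
  assumes "2 \<le> r" shows "K r x \<noteq> {}"
proof -
  have "card (K r x) \<noteq> 0" using card_K[of x r] card_K[of r x] card_K[of r x] assms
    by (cases "x < r"; cases "x < 2*r") auto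
  then show ?thesis by auto
qed

lemma card_symdiff_K:
  assumes "x < 2*r" "y < 2*r" "x \<noteq> y"
  shows "card (sym_diff (K r x) (K r y)) \<in> {2, r - 2, r}"
proof -
  have main: "card (sym_diff (K r x) (K r y)) \<in> {2, r - 2, r}" if "x < r" "y < 2*r" "x \<noteq> y" for x y
  proof (cases "y < r")
    case True
    then have "sym_diff (K r x) (K r y) = {x, y}" using that unfolding K_def by auto
    then show ?thesis using that by simp
  next
    case False
    show ?thesis
    proof (cases "x = y - r")
      case True
      then have "sym_diff (K r x) (K r y) = {0..<r}" using that False unfolding K_def by auto
      then show ?thesis by simp
    next
      case F: False
      then have "sym_diff (K r x) (K r y) = {0..<r} - {x, y - r}" using that False unfolding K_def by auto
      then show ?thesis using that F False by (simp add: card_Diff_subset numeral_2_eq_2)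
    qed
  qed
  show ?thesis
  proof (cases "x < r")
    case True then show ?thesis using main assms by blast
  next
    case xF: False
    show ?thesis
    proof (cases "y < r")
      case True then show ?thesis using main[of y x] assms by (simp add: Un_commute)
    next
      case False
      have "x - r \<noteq> y - r" using xF False assms by linarith
      then have "sym_diff (K r x) (K r y) = {x - r, y - r}" using xF False assms unfolding K_def by auto
      then show ?thesis using \<open>x - r \<noteq> y - r\<close> by simp
    qed
  qed
qed

lemma capfree_K:
  assumes "5 \<le> r" "x < 2*r" "y < 2*r" "z < 2*r" "x \<noteq> y"
  shows "sym_diff (K r x) (K r y) \<noteq> K r z"
proof
  assume H: "sym_diff (K r x) (K r y) = K r z"
  have "card (K r z) \<in> {1, r - 1}" using card_K[of z r] card_K[of r z] assms by (cases "z < r") auto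
  then show False using card_symdiff_K[OF assms(2,3,5)] H assms(1) by auto
qed



lemma bit_sum0: "((x::bit) + y = 0) \<longleftrightarrow> x = y"
  by (cases x; cases y) auto

lemma indep_legs_tip:
  assumes r: "5 \<le> r" and lt: "j < r" "k < r" "l < r" "m < r"
    and dist: "j \<noteq> k" "j \<noteq> l" "j \<noteq> m" "k \<noteq> l" "k \<noteq> m" "l \<noteq> m"
  shows "gf2_indep r (spike_col r) {l, m, j, k, 2*r}"
proof -
  have c4: "card {j,k,l,m} = 4" using dist by simp
  have "\<not> {0..<r} \<subseteq> {j,k,l,m}"
  proof
    assume "{0..<r} \<subseteq> {j,k,l,m}"
    then have "card {0..<r} \<le> card {j,k,l,m}" by (intro card_mono) auto
    then show False using c4 r by simp
  qed
  then obtain n0 where "n0 \<in> {0..<r}" "n0 \<notin> {j,k,l,m}" by blast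
  then have n: "n0 < r" "n0 \<noteq> j" "n0 \<noteq> k" "n0 \<noteq> l" "n0 \<noteq> m" by auto
  show ?thesis unfolding gf2_indep_def
  proof (intro allI impI)
    fix c :: "nat \<Rightarrow> bit"
    assume Z: "\<forall>i<r. (\<Sum>x\<in>{l, m, j, k, 2*r}. c x * spike_col r x i) = 0"
    have row: "(\<Sum>x\<in>{l, m, j, k, 2*r}. c x * spike_col r x i) =
       c l * (if i = l then 1 else 0) + c m * (if i = m then 1 else 0) + c j * (if i = j then 1 else 0)
       + c k * (if i = k then 1 else 0) + c (2*r)" for i
      using lt dist by (simp add: spike_col_def add.assoc del: add_bit_eq_xor mult_bit_eq_and)
    have t: "c (2*r) = 0" using Z[rule_format, OF n(1)] row[of n0] n
      by (simp del: add_bit_eq_xor mult_bit_eq_and)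
    have "c l = 0" using Z[rule_format, OF lt(3)] row[of l] dist t
      by (simp del: add_bit_eq_xor mult_bit_eq_and)
    moreover have "c m = 0" using Z[rule_format, OF lt(4)] row[of m] dist t
      by (simp del: add_bit_eq_xor mult_bit_eq_and)
    moreover have "c j = 0" using Z[rule_format, OF lt(1)] row[of j] dist t
      by (simp del: add_bit_eq_xor mult_bit_eq_and)
    moreover have "c k = 0" using Z[rule_format, OF lt(2)] row[of k] dist t
      by (simp del: add_bit_eq_xor mult_bit_eq_and)
    ultimately show "\<forall>x\<in>{l, m, j, k, 2*r}. c x = 0" using t by auto
  qed
qed

lemma dep_of:
  assumes "finite X" "S \<subseteq> X" "S \<noteq> {}" "VV r col S = {}"
  shows "\<not> gf2_indep r col X"
  using assms gf2_indep_iff by blast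

lemma dep_leg:
  assumes "finite B" "j < r" "j \<in> B" "2*r \<in> B"
  shows "\<not> gf2_indep r (spike_col r) (insert (r+j) B)"
proof (rule dep_of[of _ "{j, r+j, 2*r}"])
  show "VV r (spike_col r) {j, r + j, 2 * r} = {}"
    unfolding VV_def using assms(2)
    by (auto simp: spike_col_def simp del: add_bit_eq_xor mult_bit_eq_and)
qed (use assms in auto)

lemma dep_ff:
  assumes "finite B" "p < r" "q < r" "p \<noteq> q" "p \<in> B" "q \<in> B" "r + p \<in> B"
  shows "\<not> gf2_indep r (spike_col r) (insert (r+q) B)"
proof (rule dep_of[of _ "{q, p, r+p, r+q}"])
  show "VV r (spike_col r) {q, p, r+p, r+q} = {}"
    unfolding VV_def using assms(2-4)
    by (auto simp: spike_col_def simp del: add_bit_eq_xor mult_bit_eq_and)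
qed (use assms in auto)

lemma indep_t6:
  assumes r: "6 \<le> r"
  shows "gf2_indep r (spike_col r) {3, 4, 0, 1, 2, r}"
  unfolding gf2_indep_def
proof (intro allI impI)
  fix c :: "nat \<Rightarrow> bit"
  assume Z: "\<forall>i<r. (\<Sum>x\<in>{3, 4, 0, 1, 2, r}. c x * spike_col r x i) = 0"
  have row: "(\<Sum>x\<in>{3, 4, 0, 1, 2, r}. c x * spike_col r x i) =
     c 3 * (if i = 3 then 1 else 0) + c 4 * (if i = 4 then 1 else 0) + c 0 * (if i = 0 then 1 else 0)
     + c 1 * (if i = 1 then 1 else 0) + c 2 * (if i = 2 then 1 else 0) + c r * (if i = 0 then 0 else 1)" for i
    using r by (simp add: spike_col_def add.assoc del: add_bit_eq_xor mult_bit_eq_and)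
  have t: "c r = 0" using Z[rule_format, of 5] row[of 5] r
    by (simp del: add_bit_eq_xor mult_bit_eq_and)
  have "c 0 = 0" using Z[rule_format, of 0] row[of 0] t r by (simp del: add_bit_eq_xor mult_bit_eq_and)
  moreover have "c 1 = 0" using Z[rule_format, of 1] row[of 1] t r by (simp del: add_bit_eq_xor mult_bit_eq_and)
  moreover have "c 2 = 0" using Z[rule_format, of 2] row[of 2] t r by (simp del: add_bit_eq_xor mult_bit_eq_and)
  moreover have "c 3 = 0" using Z[rule_format, of 3] row[of 3] t r by (simp del: add_bit_eq_xor mult_bit_eq_and)
  moreover have "c 4 = 0" using Z[rule_format, of 4] row[of 4] t r by (simp del: add_bit_eq_xor mult_bit_eq_and)
  ultimately show "\<forall>x\<in>{3, 4, 0, 1, 2, r}. c x = 0" using t by auto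
qed



definition vm :: "nat \<Rightarrow> nat set \<Rightarrow> nat matroid" where
  "vm r E = (E, \<lambda>X. X \<subseteq> E \<and> gf2_indep r (spike_col r) X)"

lemma gr_vm[simp]: "gr (vm r E) = E" unfolding vm_def gr_def by simp
lemma indep_vm[simp]: "indep (vm r E) X \<longleftrightarrow> X \<subseteq> E \<and> gf2_indep r (spike_col r) X"
  unfolding vm_def indep_def by simp

lemma spike_vm: "spike r = vm r {0..2*r}" unfolding spike_def vm_def by simp

lemma mdel_vm: "mdel (vm r E) D = vm r (E - D)"
  unfolding mdel_def vm_def gr_def indep_def by auto

lemma her_vm:
  assumes "finite E" "indep (vm r E) Y" "X \<subseteq> Y"
  shows "indep (vm r E) X"
proof -
  have fY: "finite Y" using assms(1,2) finite_subset by auto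
  have fX: "finite X" using fY assms(3) finite_subset by auto
  show ?thesis using assms gf2_indep_iff[OF fY] gf2_indep_iff[OF fX] by auto
qed

lemma uniform_vm: "finite E \<Longrightarrow> uniform22 (vm r E) \<longleftrightarrow> \<not> witness (vm r E)"
  by (rule uniform22_iff) (rule her_vm)

lemma nowit:
  assumes r: "3 \<le> r" and E: "E \<subseteq> {0..2*r}"
    and case_: "r \<le> 4 \<or> (r = 5 \<and> 2*r \<notin> E)"
  shows "\<not> witness (vm r E)"
proof
  assume "witness (vm r E)"
  then obtain B a b c d where H: "B \<subseteq> gr (vm r E) \<and> a \<in> gr (vm r E) \<and> b \<in> gr (vm r E) \<and> c \<in> gr (vm r E) \<and> d \<in> gr (vm r E) \<and>
     a \<notin> B \<and> b \<notin> B \<and> c \<notin> B \<and> d \<notin> B \<and>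
     a \<noteq> b \<and> a \<noteq> c \<and> a \<noteq> d \<and> b \<noteq> c \<and> b \<noteq> d \<and> c \<noteq> d \<and>
     indep (vm r E) B \<and> indep (vm r E) (insert a (insert b B)) \<and> \<not> indep (vm r E) (insert c B) \<and> \<not> indep (vm r E) (insert d B)"
    unfolding witness_def by blast
  from H have W0: "B \<subseteq> E" "a \<in> E" "b \<in> E" "c \<in> E" "d \<in> E"
     "a \<notin> B" "b \<notin> B" "c \<notin> B" "d \<notin> B"
     "a \<noteq> b" "a \<noteq> c" "a \<noteq> d" "b \<noteq> c" "b \<noteq> d" "c \<noteq> d"
     "indep (vm r E) B" "indep (vm r E) (insert a (insert b B))" "\<not> indep (vm r E) (insert c B)" "\<not> indep (vm r E) (insert d B)"
    using H unfolding gr_vm by blast+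
  have W: "B \<subseteq> E" "a \<in> E" "b \<in> E" "c \<in> E" "d \<in> E"
     "a \<notin> B" "b \<notin> B" "c \<notin> B" "d \<notin> B"
     "a \<noteq> b" "a \<noteq> c" "a \<noteq> d" "b \<noteq> c" "b \<noteq> d" "c \<noteq> d"
     "gf2_indep r (spike_col r) B" "gf2_indep r (spike_col r) (insert a (insert b B))"
     "\<not> gf2_indep r (spike_col r) (insert c B)" "\<not> gf2_indep r (spike_col r) (insert d B)"
    using W0 by (simp_all only: indep_vm insert_subset simp_thms)
  have finE: "finite E" using E finite_subset by blast
  have finB: "finite B" using W(1) finE finite_subset by blast
  have inj: "inj_on (\<lambda>x. VV r (spike_col r) {x}) E"
  proof (rule inj_onI)
    fix x y assume "x \<in> E" "y \<in> E" "VV r (spike_col r) {x} = VV r (spike_col r) {y}"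
    moreover have "x \<le> 2*r" "y \<le> 2*r" using E \<open>x \<in> E\<close> \<open>y \<in> E\<close> by auto
    ultimately show "x = y" using K_inj[OF r] by (simp add: VV_spike)
  qed
  have nz: "\<forall>x\<in>E. VV r (spike_col r) {x} \<noteq> {}" using K_nz[of r] r by (simp add: VV_spike)
  interpret w: wit r "spike_col r" E B c d
    by unfold_locales (use W finB inj nz in auto)
  have "card (insert a (insert b B)) \<le> r"
    by (rule indep_card_le) (use finB W(17) in auto)
  then have cr: "card B + 2 \<le> r" using finB W by simp
  from case_ show False
  proof
    assume "r \<le> 4"
    then have "card B \<le> 2" using cr by simp
    then have "card B = 0 \<or> card B = 1 \<or> card B = 2" by auto
    then show False using w.bound1 by auto
  next
    assume r5: "r = 5 \<and> 2*r \<notin> E"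
    have "\<forall>x\<in>E. \<forall>y\<in>E. \<forall>z\<in>E. x \<noteq> y \<longrightarrow> y \<noteq> z \<longrightarrow> x \<noteq> z \<longrightarrow>
      sym_diff (VV r (spike_col r) {x}) (VV r (spike_col r) {y}) \<noteq> VV r (spike_col r) {z}"
    proof (intro ballI impI)
      fix x y z assume xyz: "x \<in> E" "y \<in> E" "z \<in> E" "x \<noteq> y"
      have lt: "x < 2*r" "y < 2*r" "z < 2*r" using xyz E r5 by (auto simp: le_less)
      show "sym_diff (VV r (spike_col r) {x}) (VV r (spike_col r) {y}) \<noteq> VV r (spike_col r) {z}"
        unfolding VV_spike using capfree_K[OF _ lt xyz(4)] r5 by simp
    qed
    then have "2 * (card B + 2) \<le> 2 ^ card B" by (rule w.bound2)
    moreover have "card B \<le> 3" using cr r5 by simp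
    then have "card B = 0 \<or> card B = 1 \<or> card B = 2 \<or> card B = 3" by auto
    ultimately show False by auto
  qed
qed

lemma gf2_her:
  assumes "finite Y" "gf2_indep r col Y" "X \<subseteq> Y"
  shows "gf2_indep r col X"
proof -
  have fX: "finite X" using assms(1,3) finite_subset by auto
  show ?thesis using assms gf2_indep_iff[OF assms(1)] gf2_indep_iff[OF fX] by auto
qed

lemma witness_vmI:
  assumes "B \<subseteq> E" "a \<in> E" "b \<in> E" "c \<in> E" "d \<in> E"
     "a \<notin> B" "b \<notin> B" "c \<notin> B" "d \<notin> B"
     "a \<noteq> b" "a \<noteq> c" "a \<noteq> d" "b \<noteq> c" "b \<noteq> d" "c \<noteq> d"
     "gf2_indep r (spike_col r) B" "gf2_indep r (spike_col r) (insert a (insert b B))"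
     "\<not> gf2_indep r (spike_col r) (insert c B)" "\<not> gf2_indep r (spike_col r) (insert d B)"
  shows "witness (vm r E)"
proof -
  have "insert a (insert b B) \<subseteq> E" using assms by blast
  then have "B \<subseteq> gr (vm r E) \<and> a \<in> gr (vm r E) \<and> b \<in> gr (vm r E) \<and> c \<in> gr (vm r E) \<and> d \<in> gr (vm r E) \<and>
     a \<notin> B \<and> b \<notin> B \<and> c \<notin> B \<and> d \<notin> B \<and>
     a \<noteq> b \<and> a \<noteq> c \<and> a \<noteq> d \<and> b \<noteq> c \<and> b \<noteq> d \<and> c \<noteq> d \<and>
     indep (vm r E) B \<and> indep (vm r E) (insert a (insert b B)) \<and> \<not> indep (vm r E) (insert c B) \<and> \<not> indep (vm r E) (insert d B)"
    unfolding gr_vm indep_vm using assms by blast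
  then show ?thesis unfolding witness_def by blast
qed

lemma wit_legs:
  assumes r: "5 \<le> r" and lt: "j < r" "k < r" "l < r" "m < r"
    and dist: "j \<noteq> k" "j \<noteq> l" "j \<noteq> m" "k \<noteq> l" "k \<noteq> m" "l \<noteq> m"
    and E: "E \<subseteq> {0..2*r}" "{j, k, l, m, r+j, r+k, 2*r} \<subseteq> E"
  shows "witness (vm r E)"
proof -
  have i: "gf2_indep r (spike_col r) {l, m, j, k, 2*r}" by (rule indep_legs_tip) (use assms in auto)
  have fi: "finite {l, m, j, k, 2*r}" by simp
  have iB: "gf2_indep r (spike_col r) {j, k, 2*r}"
    by (rule gf2_her[OF fi i]) auto
  have nc: "\<not> gf2_indep r (spike_col r) (insert (r+j) {j, k, 2*r})" by (rule dep_leg) (use lt in auto)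
  have nd: "\<not> gf2_indep r (spike_col r) (insert (r+k) {j, k, 2*r})" by (rule dep_leg) (use lt in auto)
  have i': "gf2_indep r (spike_col r) (insert l (insert m {j, k, 2*r}))" using i by simp
  show ?thesis
    by (rule witness_vmI[OF _ _ _ _ _ _ _ _ _ _ _ _ _ _ _ iB i' nc nd]) (use E lt dist in auto)
qed

lemma wit_t:
  assumes r: "6 \<le> r" and E: "E = {0..2*r} - {2*r}"
  shows "witness (vm r E)"
proof -
  have i: "gf2_indep r (spike_col r) {3, 4, 0, 1, 2, r}" by (rule indep_t6[OF r])
  have fi: "finite {3, 4, 0, 1, 2, r}" by simp
  have iB: "gf2_indep r (spike_col r) {0, 1, 2, r}"
    by (rule gf2_her[OF fi i]) auto
  have nc: "\<not> gf2_indep r (spike_col r) (insert (r+1) {0, 1, 2, r})" by (rule dep_ff[of _ 0]) (use r in auto)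
  have nd: "\<not> gf2_indep r (spike_col r) (insert (r+2) {0, 1, 2, r})" by (rule dep_ff[of _ 0]) (use r in auto)
  show ?thesis
    by (rule witness_vmI[OF _ _ _ _ _ _ _ _ _ _ _ _ _ _ _ iB i nc nd]) (use E r in auto)
qed



lemma legs_avoid:
  fixes r i :: nat
  assumes r: "5 \<le> r" and i: "i < r"
  shows "\<exists>j k l m :: nat. j < r \<and> k < r \<and> l < r \<and> m < r \<and> j \<noteq> k \<and> j \<noteq> l \<and> j \<noteq> m \<and> k \<noteq> l \<and> k \<noteq> m \<and> l \<noteq> m
     \<and> i \<noteq> j \<and> i \<noteq> k \<and> i \<noteq> l \<and> i \<noteq> m"
proof (cases "i < 4")
  case True
  show ?thesis
    apply (rule exI[of _ "if i = 0 then 4 else 0"], rule exI[of _ "if i = 1 then 4 else 1"],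
           rule exI[of _ "if i = 2 then 4 else 2"], rule exI[of _ "if i = 3 then 4 else 3"])
    using r True by auto
next
  case False
  show ?thesis
    apply (rule exI[of _ 0], rule exI[of _ 1], rule exI[of _ 2], rule exI[of _ 3])
    using r False by auto
qed

theorem lemma4p2:
  fixes r :: nat
  assumes "r \<ge> 3"
  shows "(uniform22 (spike r) \<longleftrightarrow> r \<le> 4)
    \<and> (\<forall>y \<in> gr (spike r) - {spike_tip r}. uniform22 (mdel (spike r) {y}) \<longleftrightarrow> r \<le> 4)
    \<and> (uniform22 (mdel (spike r) {spike_tip r}) \<longleftrightarrow> r \<le> 5)"
proof (intro conjI ballI)
  have fin: "finite {0..2*r}" by simp
  show "uniform22 (spike r) \<longleftrightarrow> r \<le> 4"
  proof (cases "r \<le> 4")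
    case True
    then show ?thesis unfolding spike_vm using uniform_vm[OF fin] nowit[OF assms, of "{0..2*r}"] by auto
  next
    case False
    have "witness (vm r {0..2*r})" by (rule wit_legs[of r 0 1 2 3]) (use False in auto)
    then show ?thesis unfolding spike_vm using uniform_vm[OF fin] False by auto
  qed
next
  fix y assume y: "y \<in> gr (spike r) - {spike_tip r}"
  have yr: "y < 2*r" using y unfolding spike_vm gr_vm spike_tip_def by auto
  have eq: "mdel (spike r) {y} = vm r ({0..2*r} - {y})" unfolding spike_vm mdel_vm ..
  have fin': "finite ({0..2*r} - {y})" by simp
  show "uniform22 (mdel (spike r) {y}) \<longleftrightarrow> r \<le> 4"
  proof (cases "r \<le> 4")
    case True
    then show ?thesis unfolding eq using uniform_vm[OF fin'] nowit[OF assms, of "{0..2*r} - {y}"] by auto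
  next
    case False
    define i where "i = (if y < r then y else y - r)"
    have ir: "i < r" using yr unfolding i_def by auto
    obtain j k l m where L: "j < r" "k < r" "l < r" "m < r" "j \<noteq> k" "j \<noteq> l" "j \<noteq> m" "k \<noteq> l" "k \<noteq> m" "l \<noteq> m"
      "i \<noteq> j" "i \<noteq> k" "i \<noteq> l" "i \<noteq> m"
      using legs_avoid[OF _ ir] False by auto
    have sub: "{j, k, l, m, r+j, r+k, 2*r} \<subseteq> {0..2*r} - {y}"
      using L yr unfolding i_def by (cases "y < r") auto
    have "witness (vm r ({0..2*r} - {y}))" by (rule wit_legs[OF _ L(1-10) _ sub]) (use False in auto)
    then show ?thesis unfolding eq using uniform_vm[OF fin'] False by auto
  qed
next
  have eq: "mdel (spike r) {spike_tip r} = vm r ({0..2*r} - {2*r})" unfolding spike_vm mdel_vm spike_tip_def ..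
  have fin': "finite ({0..2*r} - {2*r})" by simp
  show "uniform22 (mdel (spike r) {spike_tip r}) \<longleftrightarrow> r \<le> 5"
  proof (cases "r \<le> 5")
    case True
    then have "r \<le> 4 \<or> (r = 5 \<and> 2*r \<notin> {0..2*r} - {2*r})" by auto
    then show ?thesis unfolding eq using uniform_vm[OF fin'] nowit[OF assms, of "{0..2*r} - {2*r}"] True by auto
  next
    case False
    have "witness (vm r ({0..2*r} - {2*r}))" by (rule wit_t) (use False in auto)
    then show ?thesis unfolding eq using uniform_vm[OF fin'] False by auto
  qed
qed


end
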